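(* Let $n\ge2$. For $j\in\{1,\dots,n\}$ let $L_j\in\mathcal G(n)$ be the $n$-graph with edges $a_1\to a_2,\ a_2\to a_3,\dots,a_{n-1}\to a_n$, where $(a_1,\dots,a_n)=(2,3,\dots,j,1,j+1,\dots,n)$ is the sequence obtained from $(2,3,\dots,n)$ by inserting $1$ in position $j$ (so $L_1$ has edges $1\to2\to\dots\to n$ and $L_n$ has edges $2\to3\to\dots\to n\to1$). Then $$\sum_{j=1}^n L_j\equiv 0 \pmod{R(n)}.$$
   Context: An $n$-graph is an oriented graph with vertex set $\{1,\dots,n\}$, without loops but possibly with multiple edges; $\mathcal G(n)$ is the set of $n$-graphs and $\mathbb F\mathcal G(n)$ the vector space over a field $\mathbb F$ (characteristic $0$) with basis $\mathcal G(n)$. $R(n)\subset\mathbb F\mathcal G(n)$ is the subspace spanned by the cycle relations: (i) every $\Gamma\in\mathcal G(n)$ that contains a cycle of its underlying unoriented multigraph (two edges joining the same two vertices count as a cycle); (ii) every sum $\sum_{e\in C}\Gamma\setminus e$, where $\Gamma\in\mathcal G(n)$, $C\subset E(\Gamma)$ is an oriented cycle, and $\Gamma\setminus e$ is $\Gamma$ with the edge $e$ removed. $\equiv$ denotes equality in $\mathbb F\mathcal G(n)/R(n)$. *)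

theory Defs
  imports Main "HOL-Library.Multiset"
begin

type_synonym ngraph = "(nat \<times> nat) multiset"

definition is_ngraph :: "nat \<Rightarrow> ngraph \<Rightarrow> bool" where
  "is_ngraph n \<Gamma> \<longleftrightarrow> (\<forall>(a,b) \<in> set_mset \<Gamma>. a \<in> {1..n} \<and> b \<in> {1..n} \<and> a \<noteq> b)"

text \<open>Elements of F G(n): functions from graphs to the field (finite linear combinations);
  the basis vector of a graph:\<close>
definition gr :: "ngraph \<Rightarrow> ngraph \<Rightarrow> 'a::field_char_0" where
  "gr \<Gamma> = (\<lambda>\<Delta>. if \<Delta> = \<Gamma> then 1 else 0)"

text \<open>The underlying unoriented multigraph of \<Gamma> contains a cycle: distinct vertices
  v_0,...,v_{k-1} (k \<ge> 2) and distinct edges (a sub-multiset) e_0,...,e_{k-1}, where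
  e_i joins v_i and v_{i+1 mod k} in either orientation.\<close>
definition has_cycle :: "ngraph \<Rightarrow> bool" where
  "has_cycle \<Gamma> \<longleftrightarrow> (\<exists>vs es. distinct vs \<and> length vs \<ge> 2 \<and> length es = length vs \<and>
      mset es \<subseteq># \<Gamma> \<and>
      (\<forall>i < length vs. es ! i = (vs ! i, rotate1 vs ! i) \<or> es ! i = (rotate1 vs ! i, vs ! i)))"

definition cyc_edges :: "nat list \<Rightarrow> ngraph" where
  "cyc_edges vs = mset (zip vs (rotate1 vs))"

inductive_set Rel :: "nat \<Rightarrow> (ngraph \<Rightarrow> 'a::field_char_0) set" for n :: nat where
  zero: "(\<lambda>_. 0) \<in> Rel n"
| add: "f \<in> Rel n \<Longrightarrow> g \<in> Rel n \<Longrightarrow> (\<lambda>\<Delta>. f \<Delta> + g \<Delta>) \<in> Rel n"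
| smult: "f \<in> Rel n \<Longrightarrow> (\<lambda>\<Delta>. c * f \<Delta>) \<in> Rel n"
| cyc: "is_ngraph n \<Gamma> \<Longrightarrow> has_cycle \<Gamma> \<Longrightarrow> gr \<Gamma> \<in> Rel n"
| ocyc: "is_ngraph n \<Gamma> \<Longrightarrow> distinct vs \<Longrightarrow> length vs \<ge> 2 \<Longrightarrow> cyc_edges vs \<subseteq># \<Gamma> \<Longrightarrow>
         (\<lambda>\<Delta>. \<Sum>e \<in># cyc_edges vs. gr (\<Gamma> - {#e#}) \<Delta>) \<in> Rel n"

definition seqL :: "nat \<Rightarrow> nat \<Rightarrow> nat list" where
  "seqL n j = [2..<j+1] @ 1 # [j+1..<n+1]"

definition Lgraph :: "nat \<Rightarrow> nat \<Rightarrow> ngraph" where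
  "Lgraph n j = mset (zip (seqL n j) (tl (seqL n j)))"

lemma "seqL 4 1 = [1,2,3,4]" "seqL 4 4 = [2,3,4,1]" "seqL 4 2 = [2,1,3,4]"
  by (simp_all add: seqL_def upt_rec)

end

theory Submission
  imports Defs
begin

lemma Rel_diff: "f \<in> Rel n \<Longrightarrow> g \<in> Rel n \<Longrightarrow> (\<lambda>\<Delta>. f \<Delta> - g \<Delta>) \<in> Rel n"
proof -
  assume f: "f \<in> Rel n" and g: "g \<in> Rel n"
  have "(\<lambda>\<Delta>. (-1) * g \<Delta>) \<in> Rel n" by (rule Rel.smult[OF g])
  from Rel.add[OF f this] show ?thesis by simp
qed

lemma Rel_sum: "finite I \<Longrightarrow> (\<forall>i\<in>I. f i \<in> Rel n) \<Longrightarrow> (\<lambda>\<Delta>. \<Sum>i\<in>I. f i \<Delta>) \<in> Rel n"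
proof (induction I rule: finite_induct)
  case empty then show ?case using Rel.zero by simp
next
  case (insert x F)
  then have "(\<lambda>\<Delta>. f x \<Delta> + (\<Sum>i\<in>F. f i \<Delta>)) \<in> Rel n" by (intro Rel.add) auto
  then show ?case using insert by simp
qed

lemma is_ngraph_add_mset[simp]:
  "is_ngraph n (add_mset (a,b) G) \<longleftrightarrow> a \<in> {1..n} \<and> b \<in> {1..n} \<and> a \<noteq> b \<and> is_ngraph n G"
  unfolding is_ngraph_def by auto

lemma is_ngraph_plus[simp]: "is_ngraph n (A + B) \<longleftrightarrow> is_ngraph n A \<and> is_ngraph n B"
  unfolding is_ngraph_def by auto

definition pe :: "nat \<Rightarrow> nat \<Rightarrow> ngraph" where
  "pe a b = mset (map (\<lambda>k. (k, Suc k)) [a..<b])"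

lemma is_ngraph_pe: "1 \<le> a \<Longrightarrow> b \<le> n \<Longrightarrow> is_ngraph n (pe a b)"
  unfolding is_ngraph_def pe_def by auto

lemma pe_split: "a \<le> m \<Longrightarrow> m \<le> b \<Longrightarrow> pe a b = pe a m + pe m b"
proof -
  assume h: "a \<le> m" "m \<le> b"
  have "[a..<b] = [a..<m] @ [m..<b]" using upt_add_eq_append[OF h(1), of "b - m"] h by simp
  then show ?thesis unfolding pe_def by simp
qed

lemma pe_Cons: "a < b \<Longrightarrow> pe a b = add_mset (a, Suc a) (pe (Suc a) b)"
  unfolding pe_def by (simp add: upt_conv_Cons)

definition edgesL :: "nat list \<Rightarrow> ngraph" where
  "edgesL xs = mset (zip xs (tl xs))"

lemma edgesL_Cons2[simp]: "edgesL (x # z # zs) = add_mset (x,z) (edgesL (z # zs))"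
  unfolding edgesL_def by simp

lemma edgesL_single[simp]: "edgesL [x] = {#}"
  unfolding edgesL_def by simp

lemma edgesL_append: "edgesL (xs @ y # ys) = edgesL (xs @ [y]) + edgesL (y # ys)"
proof (induction xs)
  case Nil then show ?case by simp
next
  case (Cons x xs)
  then show ?case by (cases xs) auto
qed

lemma edgesL_snoc: "xs \<noteq> [] \<Longrightarrow> edgesL (xs @ [y]) = add_mset (last xs, y) (edgesL xs)"
proof (induction xs)
  case Nil then show ?case by simp
next
  case (Cons x xs)
  then show ?case by (cases xs) auto
qed

lemma edgesL_upt: "edgesL [a..<a+k+1] = pe a (a+k)"
proof (induction k arbitrary: a)
  case 0 then show ?case by (simp add: pe_def)
next
  case (Suc k)
  have "[a..<a + Suc k + 1] = a # Suc a # [Suc (Suc a)..<Suc a + k + 1]"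
    by (simp add: upt_conv_Cons)
  moreover have "[Suc a..<Suc a + k + 1] = Suc a # [Suc (Suc a)..<Suc a + k + 1]"
    by (simp add: upt_conv_Cons)
  ultimately have "edgesL [a..<a + Suc k + 1] = add_mset (a, Suc a) (edgesL [Suc a..<Suc a + k + 1])"
    by simp
  also have "\<dots> = pe a (a + Suc k)" using Suc.IH[of "Suc a"] by (simp add: pe_Cons)
  finally show ?case .
qed

lemma edgesL_upt': "a \<le> b \<Longrightarrow> edgesL [a..<Suc b] = pe a b"
  using edgesL_upt[of a "b - a"] by simp

lemma Lgraph_eq: "Lgraph n j = edgesL (seqL n j)"
  unfolding Lgraph_def edgesL_def ..

lemma L1: "n \<ge> 2 \<Longrightarrow> Lgraph n 1 = add_mset (1,2) (pe 2 n)"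
proof -
  assume n: "n \<ge> 2"
  have s: "seqL n 1 = 1 # [2..<Suc n]" by (simp del: upt_Suc add: seqL_def numeral_2_eq_2)
  have u: "[2..<Suc n] = 2 # [Suc 2..<Suc n]" using n by (simp only: upt_conv_Cons)
  have "edgesL (1 # [2..<Suc n]) = add_mset (1,2) (edgesL [2..<Suc n])"
    by (subst u, subst u) (rule edgesL_Cons2)
  then show ?thesis using n by (simp only: Lgraph_eq s edgesL_upt')
qed

lemma Ln: "n \<ge> 2 \<Longrightarrow> Lgraph n n = add_mset (n,1) (pe 2 n)"
proof -
  assume n: "n \<ge> 2"
  have s: "seqL n n = [2..<Suc n] @ [1]" by (simp del: upt_Suc add: seqL_def)
  have "last [2..<Suc n] = n" using n by simp
  then have "edgesL ([2..<Suc n] @ [1]) = add_mset (n,1) (edgesL [2..<Suc n])"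
    using edgesL_snoc[of "[2..<Suc n]" 1] n by simp
  then show ?thesis using n by (simp only: Lgraph_eq s edgesL_upt')
qed

lemma Lj: "2 \<le> j \<Longrightarrow> j < n \<Longrightarrow>
   Lgraph n j = add_mset (j,1) (add_mset (1,Suc j) (pe 2 j + pe (Suc j) n))"
proof -
  assume j: "2 \<le> j" "j < n"
  have s: "seqL n j = [2..<Suc j] @ 1 # [Suc j..<Suc n]"
    by (simp del: upt_Suc add: seqL_def)
  have u: "[Suc j..<Suc n] = Suc j # [Suc (Suc j)..<Suc n]" using j by (simp only: upt_conv_Cons)
  have l: "last [2..<Suc j] = j" using j by simp
  have ne: "[2..<Suc j] \<noteq> []" using j by simp
  have "edgesL (seqL n j) = edgesL ([2..<Suc j] @ [1]) + edgesL (1 # [Suc j..<Suc n])"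
    unfolding s by (rule edgesL_append)
  also have "edgesL ([2..<Suc j] @ [1]) = add_mset (j,1) (pe 2 j)"
    using edgesL_snoc[OF ne, of 1] l edgesL_upt'[of 2 j] j by simp
  also have "edgesL (1 # [Suc j..<Suc n]) = add_mset (1, Suc j) (pe (Suc j) n)"
  proof -
    have "edgesL (1 # [Suc j..<Suc n]) = add_mset (1, Suc j) (edgesL [Suc j..<Suc n])"
      unfolding u by simp
    then show ?thesis using edgesL_upt'[of "Suc j" n] j by simp
  qed
  finally show ?thesis unfolding Lgraph_eq by simp
qed

lemma rev_rel:
  assumes "is_ngraph n (add_mset (a,b) (add_mset (b,a) G))" "a \<noteq> b"
  shows "(\<lambda>\<Delta>. gr (add_mset (b,a) G) \<Delta> + gr (add_mset (a,b) G) \<Delta>) \<in> Rel n"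
proof -
  have c: "cyc_edges [a,b] = {#(a,b),(b,a)#}" by (simp add: cyc_edges_def)
  have "(\<lambda>\<Delta>. \<Sum>e \<in># cyc_edges [a,b]. gr (add_mset (a,b) (add_mset (b,a) G) - {#e#}) \<Delta>) \<in> Rel n"
    by (rule Rel.ocyc) (use assms c in auto)
  then show ?thesis using assms by (simp add: c add_mset_commute ac_simps)
qed

lemma tri_rel:
  assumes "is_ngraph n (add_mset (a,b) (add_mset (b,c) (add_mset (c,a) G)))" "distinct [a,b,c]"
  shows "(\<lambda>\<Delta>. gr (add_mset (b,c) (add_mset (c,a) G)) \<Delta> + gr (add_mset (a,b) (add_mset (c,a) G)) \<Delta>
     + gr (add_mset (a,b) (add_mset (b,c) G)) \<Delta>) \<in> Rel n"
proof -
  have c: "cyc_edges [a,b,c] = {#(a,b),(b,c),(c,a)#}" by (simp add: cyc_edges_def)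
  have "(\<lambda>\<Delta>. \<Sum>e \<in># cyc_edges [a,b,c]. gr (add_mset (a,b) (add_mset (b,c) (add_mset (c,a) G)) - {#e#}) \<Delta>) \<in> Rel n"
    by (rule Rel.ocyc) (use assms c in auto)
  then show ?thesis using assms by (simp add: c add_mset_commute ac_simps)
qed

lemma middle:
  assumes j: "2 \<le> j" "j < n"
  shows "((\<lambda>\<Delta>. gr (Lgraph n j) \<Delta> - gr (add_mset (1,Suc j) (pe 2 n)) \<Delta>
           + gr (add_mset (1,j) (pe 2 n)) \<Delta>) :: ngraph \<Rightarrow> 'a::field_char_0) \<in> Rel n"
proof -
  define Q where "Q = pe 2 j + pe (Suc j) n"
  have P: "pe 2 n = add_mset (j, Suc j) Q"
    unfolding Q_def using j pe_split[of 2 j n] pe_Cons[of j n] by simp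
  have gQ: "is_ngraph n Q" unfolding Q_def using j by (simp add: is_ngraph_pe)
  have L: "Lgraph n j = add_mset (j,1) (add_mset (1,Suc j) Q)" using Lj[OF j] Q_def by simp
  define X where "X = add_mset (1,Suc j) (add_mset (Suc j,j) Q)"
  define Y where "Y = add_mset (j,1) (add_mset (Suc j,j) Q)"
  define A1 where "A1 = add_mset (1,Suc j) (pe 2 n)"
  define A0 where "A0 = add_mset (1,j) (pe 2 n)"
  define Z where "Z = add_mset (j,1) (pe 2 n)"
  have jn: "j \<in> {1..n}" "Suc j \<in> {1..n}" "(1::nat) \<in> {1..n}" "j \<noteq> 1" "Suc j \<noteq> j" "Suc j \<noteq> 1"
    using j by auto
  have T: "((\<lambda>\<Delta>. gr X \<Delta> + gr Y \<Delta> + gr (Lgraph n j) \<Delta>) :: ngraph \<Rightarrow> 'a) \<in> Rel n"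
    unfolding X_def Y_def L
    apply (rule tri_rel) using j gQ by auto
  have R1: "((\<lambda>\<Delta>. gr X \<Delta> + gr A1 \<Delta>) :: ngraph \<Rightarrow> 'a) \<in> Rel n"
  proof -
    have e1: "X = add_mset (Suc j,j) (add_mset (1,Suc j) Q)" unfolding X_def by (rule add_mset_commute)
    have e2: "A1 = add_mset (j,Suc j) (add_mset (1,Suc j) Q)" unfolding A1_def P by (rule add_mset_commute)
    show ?thesis unfolding e1 e2
      apply (rule rev_rel) using j gQ by auto
  qed
  have R2: "((\<lambda>\<Delta>. gr Y \<Delta> + gr Z \<Delta>) :: ngraph \<Rightarrow> 'a) \<in> Rel n"
  proof -
    have e1: "Y = add_mset (Suc j,j) (add_mset (j,1) Q)" unfolding Y_def by (rule add_mset_commute)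
    have e2: "Z = add_mset (j,Suc j) (add_mset (j,1) Q)" unfolding Z_def P by (rule add_mset_commute)
    show ?thesis unfolding e1 e2
      apply (rule rev_rel) using j gQ by auto
  qed
  have R3: "((\<lambda>\<Delta>. gr Z \<Delta> + gr A0 \<Delta>) :: ngraph \<Rightarrow> 'a) \<in> Rel n"
    unfolding Z_def A0_def
    apply (rule rev_rel) using j gQ P by auto
  have S1: "((\<lambda>\<Delta>. (gr X \<Delta> + gr Y \<Delta> + gr (Lgraph n j) \<Delta>) - (gr X \<Delta> + gr A1 \<Delta>)) :: ngraph \<Rightarrow> 'a) \<in> Rel n"
    by (rule Rel_diff[OF T R1])
  have S2: "((\<lambda>\<Delta>. ((gr X \<Delta> + gr Y \<Delta> + gr (Lgraph n j) \<Delta>) - (gr X \<Delta> + gr A1 \<Delta>)) - (gr Y \<Delta> + gr Z \<Delta>)) :: ngraph \<Rightarrow> 'a) \<in> Rel n"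
    by (rule Rel_diff[OF S1 R2])
  have S3: "((\<lambda>\<Delta>. (((gr X \<Delta> + gr Y \<Delta> + gr (Lgraph n j) \<Delta>) - (gr X \<Delta> + gr A1 \<Delta>)) - (gr Y \<Delta> + gr Z \<Delta>)) + (gr Z \<Delta> + gr A0 \<Delta>)) :: ngraph \<Rightarrow> 'a) \<in> Rel n"
    by (rule Rel.add[OF S2 R3])
  have "((\<lambda>\<Delta>. gr (Lgraph n j) \<Delta> - gr A1 \<Delta> + gr A0 \<Delta>) :: ngraph \<Rightarrow> 'a) =
        (\<lambda>\<Delta>. (((gr X \<Delta> + gr Y \<Delta> + gr (Lgraph n j) \<Delta>) - (gr X \<Delta> + gr A1 \<Delta>)) - (gr Y \<Delta> + gr Z \<Delta>)) + (gr Z \<Delta> + gr A0 \<Delta>))"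
    by (rule ext) (simp only: algebra_simps; simp)
  with S3 show ?thesis unfolding A1_def A0_def by simp
qed

theorem lemma4p6:
  fixes n :: nat
  assumes "n \<ge> 2"
  shows "((\<lambda>\<Delta>. \<Sum>j = 1..n. gr (Lgraph n j) \<Delta>) :: ngraph \<Rightarrow> 'a::field_char_0) \<in> Rel n"
proof -
  define A where "A k = add_mset (1,k) (pe 2 n)" for k
  define E where "E j = ((\<lambda>\<Delta>. gr (Lgraph n j) \<Delta> - gr (A (Suc j)) \<Delta> + gr (A j) \<Delta>) :: ngraph \<Rightarrow> 'a)" for j
  have E: "\<forall>j\<in>{2..n-1}. E j \<in> Rel n"
  proof
    fix j assume "j \<in> {2..n-1}"
    then have "2 \<le> j" "j < n" using assms by auto
    from middle[OF this] show "E j \<in> Rel n" unfolding E_def A_def .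
  qed
  have R0: "((\<lambda>\<Delta>. gr (add_mset (n,1) (pe 2 n)) \<Delta> + gr (A n) \<Delta>) :: ngraph \<Rightarrow> 'a) \<in> Rel n"
    unfolding A_def apply (rule rev_rel) using assms is_ngraph_pe[of 2 n n] by auto
  have S0: "(\<lambda>\<Delta>. \<Sum>j\<in>{2..n-1}. E j \<Delta>) \<in> Rel n"
    by (rule Rel_sum[OF _ E]) simp
  have S: "(\<lambda>\<Delta>. (\<Sum>j\<in>{2..n-1}. E j \<Delta>) + (gr (add_mset (n,1) (pe 2 n)) \<Delta> + gr (A n) \<Delta>)) \<in> Rel n"
    by (rule Rel.add[OF S0 R0])
  have eq: "(\<Sum>j = 1..n. gr (Lgraph n j) \<Delta>) = (\<Sum>j\<in>{2..n-1}. E j \<Delta>) + (gr (add_mset (n,1) (pe 2 n)) \<Delta> + gr (A n) \<Delta>)"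
    for \<Delta>
  proof -
    have I: "{1..n} = insert 1 (insert n {2..n-1})" using assms by auto
    have s1: "(\<Sum>j = 1..n. gr (Lgraph n j) \<Delta>) = gr (Lgraph n 1) \<Delta> + (gr (Lgraph n n) \<Delta> + (\<Sum>j\<in>{2..n-1}. gr (Lgraph n j) \<Delta>))"
      unfolding I using assms by (subst sum.insert) auto
    have s2: "(\<Sum>j\<in>{2..n-1}. gr (Lgraph n j) \<Delta>) = (\<Sum>j\<in>{2..n-1}. E j \<Delta> + (gr (A (Suc j)) \<Delta> - gr (A j) \<Delta>))"
      unfolding E_def by (intro sum.cong) auto
    have s3: "(\<Sum>j\<in>{2..n-1}. gr (A (Suc j)) \<Delta> - gr (A j) \<Delta>) = gr (A n) \<Delta> - gr (A 2) \<Delta>"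
      using sum_Suc_diff[of 2 "n-1" "\<lambda>j. gr (A j) \<Delta>"] assms by simp
    have l1: "Lgraph n 1 = A 2" unfolding A_def using L1[OF assms] .
    have ln: "Lgraph n n = add_mset (n,1) (pe 2 n)" using Ln[OF assms] .
    show ?thesis unfolding s1 s2 sum.distrib s3 l1 ln by simp
  qed
  show ?thesis unfolding eq by (rule S)
qed

end
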